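(* Let $(S,\mathcal{E}^Q)$ be a quantitative evidence frame with $\mathcal{E}^Q=\{(E_1,p_1),\dots,(E_k,p_k)\}$. Let $i:2^{\mathcal{E}}\to\tau_{\mathcal{E}}$ be given by $i(\emptyset)=S$ and $i(\mathbf{E})=\bigcap\mathbf{E}$ for $\mathbf{E}\neq\emptyset$, and let $\mathcal{J}_{DS}=\tau_{\mathcal{E}}\setminus\{\emptyset\}$. For $j=1,\dots,k$ let $m_j$ be the basic probability assignment on $S$ with $m_j(E_j)=p_j$, $m_j(S)=1-p_j$ (and $0$ elsewhere), let $m=m_1\oplus\cdots\oplus m_k$ be obtained by Dempster's rule of combination, and let $\mathrm{Bel}(P)=\sum_{A\subseteq P}m(A)$. Then $\mathrm{Bel}_{\mathcal{J}_{DS}}(i,P)=\mathrm{Bel}(P)$ for every $P\subseteq S$.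
   Context: A quantitative evidence frame is a pair $(S,\mathcal{E}^Q)$ where $S$ is a finite nonempty set and $\mathcal{E}^Q=\{(E_1,p_1),\dots,(E_k,p_k)\}$ with $E_1,\dots,E_k$ distinct, $p_j\in(0,1)$, and $\mathcal{E}=\{E_1,\dots,E_k\}$ a nonempty family of subsets of $S$ with $\emptyset\notin\mathcal{E}$, $S\notin\mathcal{E}$. $\tau_{\mathcal{E}}$ is the topology on $S$ generated by $\mathcal{E}$: $\emptyset$, $S$, all finite intersections of members of $\mathcal{E}$, and all unions of such. Define $\delta(\mathbf{E})=\prod_{E_j\in\mathbf{E}}p_j\prod_{E_j\notin\mathbf{E}}(1-p_j)$ for $\mathbf{E}\subseteq\mathcal{E}$; for $f:2^{\mathcal{E}}\to\tau_{\mathcal{E}}$, $\delta_\tau(f,T)=\sum_{\mathbf{E}\subseteq\mathcal{E}:\,f(\mathbf{E})=T}\delta(\mathbf{E})$ if $T\in\tau_{\mathcal{E}}$ and $0$ otherwise; for $\mathcal{J}\subseteq\tau_{\mathcal{E}}$, $\delta_{\mathcal{J}}(f,A)=\delta_\tau(f,A)/\sum_{T\in\mathcal{J}}\delta_\tau(f,T)$ if $A\in\mathcal{J}$ and $0$ otherwise; $\mathrm{Bel}_{\mathcal{J}}(f,P)=\sum_{A\subseteq P}\delta_{\mathcal{J}}(f,A)$. A basic probability assignment on $S$ is $m:2^S\to[0,1]$ with $m(\emptyset)=0$ and $\sum_{A\subseteq S}m(A)=1$. Dempster's rule: for basic probability assignments $m_1,m_2$ with $K=1-\sum_{A\cap B=\emptyset}m_1(A)m_2(B)>0$,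 $(m_1\oplus m_2)(\emptyset)=0$ and $(m_1\oplus m_2)(C)=\frac1K\sum_{A\cap B=C}m_1(A)m_2(B)$ for nonempty $C\subseteq S$; $m_1\oplus\cdots\oplus m_k$ is obtained by applying this rule successively. *)

theory Defs
  imports Complex_Main
begin

text \<open>Quantitative evidence frame: S finite nonempty; the evidence pieces are
  indexed as E 0, ..., E (k-1) with weights p 0, ..., p (k-1).\<close>
definition qef :: "'a set \<Rightarrow> nat \<Rightarrow> (nat \<Rightarrow> 'a set) \<Rightarrow> (nat \<Rightarrow> real) \<Rightarrow> bool" where
  "qef S k E p \<longleftrightarrow> finite S \<and> S \<noteq> {} \<and> k \<ge> 1 \<and> inj_on E {..<k} \<and>
     (\<forall>j<k. E j \<subseteq> S \<and> E j \<noteq> {} \<and> E j \<noteq> S \<and> 0 < p j \<and> p j < 1)"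

definition evfam :: "nat \<Rightarrow> (nat \<Rightarrow> 'a set) \<Rightarrow> 'a set set" where
  "evfam k E = E ` {..<k}"

definition gen_topology :: "'a set \<Rightarrow> 'a set set \<Rightarrow> 'a set set" where
  "gen_topology S Es = {{}, S} \<union>
     {\<Union> F | F. F \<subseteq> {\<Inter> G | G. finite G \<and> G \<noteq> {} \<and> G \<subseteq> Es}}"

definition delta :: "nat \<Rightarrow> (nat \<Rightarrow> 'a set) \<Rightarrow> (nat \<Rightarrow> real) \<Rightarrow> 'a set set \<Rightarrow> real" where
  "delta k E p B = (\<Prod>j<k. if E j \<in> B then p j else 1 - p j)"

definition delta_tau :: "'a set \<Rightarrow> nat \<Rightarrow> (nat \<Rightarrow> 'a set) \<Rightarrow> (nat \<Rightarrow> real)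
     \<Rightarrow> ('a set set \<Rightarrow> 'a set) \<Rightarrow> 'a set \<Rightarrow> real" where
  "delta_tau S k E p f T =
     (if T \<in> gen_topology S (evfam k E)
      then (\<Sum>B \<in> {B. B \<subseteq> evfam k E \<and> f B = T}. delta k E p B) else 0)"

definition delta_J :: "'a set \<Rightarrow> nat \<Rightarrow> (nat \<Rightarrow> 'a set) \<Rightarrow> (nat \<Rightarrow> real)
     \<Rightarrow> ('a set set \<Rightarrow> 'a set) \<Rightarrow> 'a set set \<Rightarrow> 'a set \<Rightarrow> real" where
  "delta_J S k E p f J A =
     (if A \<in> J then delta_tau S k E p f A / (\<Sum>T\<in>J. delta_tau S k E p f T) else 0)"

definition Bel_J :: "'a set \<Rightarrow> nat \<Rightarrow> (nat \<Rightarrow> 'a set) \<Rightarrow> (nat \<Rightarrow> real)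
     \<Rightarrow> ('a set set \<Rightarrow> 'a set) \<Rightarrow> 'a set set \<Rightarrow> 'a set \<Rightarrow> real" where
  "Bel_J S k E p f J P = (\<Sum>A \<in> Pow P. delta_J S k E p f J A)"

definition intersection_map :: "'a set \<Rightarrow> 'a set set \<Rightarrow> 'a set" where
  "intersection_map S B = (if B = {} then S else \<Inter> B)"

definition simple_bpa :: "'a set \<Rightarrow> 'a set \<Rightarrow> real \<Rightarrow> 'a set \<Rightarrow> real" where
  "simple_bpa S E p A = (if A = E then p else if A = S then 1 - p else 0)"

definition dempster :: "'a set \<Rightarrow> ('a set \<Rightarrow> real) \<Rightarrow> ('a set \<Rightarrow> real) \<Rightarrow> 'a set \<Rightarrow> real" where
  "dempster S m1 m2 C =
     (let K = 1 - (\<Sum>(A,B) \<in> {(A,B). A \<subseteq> S \<and> B \<subseteq> S \<and> A \<inter> B = {}}. m1 A * m2 B)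
      in if C = {} then 0
         else (\<Sum>(A,B) \<in> {(A,B). A \<subseteq> S \<and> B \<subseteq> S \<and> A \<inter> B = C}. m1 A * m2 B) / K)"

text \<open>Successive combination: dempster_comb S ms n = ms 0 \<oplus> ... \<oplus> ms n.\<close>
primrec dempster_comb :: "'a set \<Rightarrow> (nat \<Rightarrow> 'a set \<Rightarrow> real) \<Rightarrow> nat \<Rightarrow> 'a set \<Rightarrow> real" where
  "dempster_comb S ms 0 = ms 0"
| "dempster_comb S ms (Suc n) = dempster S (dempster_comb S ms n) (ms (Suc n))"

definition Bel :: "('a set \<Rightarrow> real) \<Rightarrow> 'a set \<Rightarrow> real" where
  "Bel m P = (\<Sum>A \<in> Pow P. m A)"

end

theory Submission
  imports Defs
begin

definition wt :: "(nat \<Rightarrow> real) \<Rightarrow> nat \<Rightarrow> nat set \<Rightarrow> real" where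
  "wt p n I = (\<Prod>j<n. if j \<in> I then p j else 1 - p j)"

definition imap :: "'a set \<Rightarrow> (nat \<Rightarrow> 'a set) \<Rightarrow> nat set \<Rightarrow> 'a set" where
  "imap S E I = S \<inter> \<Inter>(E ` I)"

definition um :: "'a set \<Rightarrow> (nat \<Rightarrow> 'a set) \<Rightarrow> (nat \<Rightarrow> real) \<Rightarrow> nat \<Rightarrow> 'a set \<Rightarrow> real" where
  "um S E p n C = (\<Sum>I\<in>Pow {..<n}. if imap S E I = C then wt p n I else 0)"

lemma um0: "um S E p 0 C = (if S = C then 1 else 0)"
  by (simp add: um_def imap_def wt_def)

lemma um_out: "\<not> C \<subseteq> S \<Longrightarrow> um S E p n C = 0"
  unfolding um_def imap_def by (intro sum.neutral) auto

lemma wt_Suc1: "I \<subseteq> {..<n} \<Longrightarrow> wt p (Suc n) I = wt p n I * (1 - p n)"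
  unfolding wt_def by (auto simp: lessThan_Suc)

lemma wt_Suc2: "I \<subseteq> {..<n} \<Longrightarrow> wt p (Suc n) (insert n I) = wt p n I * p n"
proof -
  assume a: "I \<subseteq> {..<n}"
  have "(\<Prod>j<n. if j \<in> insert n I then p j else 1 - p j) = (\<Prod>j<n. if j \<in> I then p j else 1 - p j)"
    by (rule prod.cong) auto
  then show ?thesis unfolding wt_def lessThan_Suc by (simp add: mult.commute)
qed

lemma swap_delta:
  assumes "finite S"
  shows "(\<Sum>A\<in>Pow S. if A \<inter> F = C then um S E p n A else 0)
       = (\<Sum>I\<in>Pow {..<n}. if imap S E I \<inter> F = C then wt p n I else 0)"
proof -
  have "(\<Sum>A\<in>Pow S. if A \<inter> F = C then um S E p n A else 0)
      = (\<Sum>A\<in>Pow S. \<Sum>I\<in>Pow {..<n}. if A \<inter> F = C \<and> imap S E I = A then wt p n I else 0)"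
    unfolding um_def by (rule sum.cong) (auto intro!: sum.cong)
  also have "\<dots> = (\<Sum>I\<in>Pow {..<n}. \<Sum>A\<in>Pow S. if A \<inter> F = C \<and> imap S E I = A then wt p n I else 0)"
    by (rule sum.swap)
  also have "\<dots> = (\<Sum>I\<in>Pow {..<n}. if imap S E I \<inter> F = C then wt p n I else 0)"
  proof (rule sum.cong)
    fix I assume "I \<in> Pow {..<n}"
    have "imap S E I \<in> Pow S" by (auto simp: imap_def)
    have "(\<Sum>A\<in>Pow S. if A \<inter> F = C \<and> imap S E I = A then wt p n I else 0)
        = (\<Sum>A\<in>Pow S. if imap S E I = A then (if imap S E I \<inter> F = C then wt p n I else 0) else 0)"
      by (rule sum.cong) auto
    also have "\<dots> = (if imap S E I \<inter> F = C then wt p n I else 0)"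
      using assms \<open>imap S E I \<in> Pow S\<close> by (simp add: sum.delta')
    finally show "(\<Sum>A\<in>Pow S. if A \<inter> F = C \<and> imap S E I = A then wt p n I else 0)
        = (if imap S E I \<inter> F = C then wt p n I else 0)" .
  qed simp
  finally show ?thesis .
qed

lemma um_Suc:
  assumes "finite S"
  shows "um S E p (Suc n) C = p n * (\<Sum>A\<in>Pow S. if A \<inter> E n = C then um S E p n A else 0)
      + (1 - p n) * um S E p n C"
proof -
  have inj: "inj_on (insert n) (Pow {..<n})"
    by (rule inj_onI) (metis Pow_iff insert_ident lessThan_iff less_irrefl subsetD)
  have disj: "Pow {..<n} \<inter> insert n ` Pow {..<n} = {}" by auto
  have "um S E p (Suc n) C = (\<Sum>I\<in>Pow {..<n}. if imap S E I = C then wt p (Suc n) I else 0)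
     + (\<Sum>I\<in>insert n ` Pow {..<n}. if imap S E I = C then wt p (Suc n) I else 0)"
    unfolding um_def lessThan_Suc Pow_insert
    by (rule sum.union_disjoint) (use disj in auto)
  also have "(\<Sum>I\<in>Pow {..<n}. if imap S E I = C then wt p (Suc n) I else 0)
      = (1 - p n) * um S E p n C"
    unfolding um_def sum_distrib_left by (rule sum.cong) (auto simp: wt_Suc1)
  also have "(\<Sum>I\<in>insert n ` Pow {..<n}. if imap S E I = C then wt p (Suc n) I else 0)
      = (\<Sum>I\<in>Pow {..<n}. if imap S E (insert n I) = C then wt p (Suc n) (insert n I) else 0)"
    by (subst sum.reindex[OF inj]) simp
  also have "\<dots> = p n * (\<Sum>I\<in>Pow {..<n}. if imap S E I \<inter> E n = C then wt p n I else 0)"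
    unfolding sum_distrib_left
    by (rule sum.cong) (auto simp: wt_Suc2 imap_def Int_ac)
  also have "\<dots> = p n * (\<Sum>A\<in>Pow S. if A \<inter> E n = C then um S E p n A else 0)"
    using swap_delta[OF assms] by simp
  finally show ?thesis by simp
qed


lemma um_total:
  assumes "finite S"
  shows "(\<Sum>A\<in>Pow S. um S E p n A) = 1"
proof (induction n)
  case 0
  have "(\<Sum>A\<in>Pow S. um S E p 0 A) = (\<Sum>A\<in>Pow S. if S = A then 1 else 0)"
    by (simp add: um0)
  also have "\<dots> = 1" using assms by (simp add: sum.delta)
  finally show ?case .
next
  case (Suc n)
  have sw: "(\<Sum>C\<in>Pow S. \<Sum>A\<in>Pow S. if A \<inter> E n = C then um S E p n A else 0)
      = (\<Sum>A\<in>Pow S. um S E p n A)"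
  proof -
    have "(\<Sum>C\<in>Pow S. \<Sum>A\<in>Pow S. if A \<inter> E n = C then um S E p n A else 0)
       = (\<Sum>A\<in>Pow S. \<Sum>C\<in>Pow S. if A \<inter> E n = C then um S E p n A else 0)"
      by (rule sum.swap)
    also have "\<dots> = (\<Sum>A\<in>Pow S. um S E p n A)"
      using assms by (intro sum.cong) (auto simp: sum.delta)
    finally show ?thesis .
  qed
  show ?case
    unfolding um_Suc[OF assms] sum.distrib sum_distrib_left[symmetric] sw Suc by simp
qed

lemma um_nonneg:
  assumes "finite S" "\<forall>j<n. 0 \<le> p j \<and> p j \<le> 1"
  shows "0 \<le> um S E p n A"
  using assms(2)
proof (induction n arbitrary: A)
  case 0 then show ?case by (simp add: um0)
next
  case (Suc n)
  then have h: "\<And>A. 0 \<le> um S E p n A" "0 \<le> p n" "p n \<le> 1" by auto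
  show ?case unfolding um_Suc[OF assms(1)]
    using h by (intro add_nonneg_nonneg mult_nonneg_nonneg sum_nonneg) auto
qed

lemma um_S_pos:
  assumes "finite S" "\<forall>j<n. 0 \<le> p j \<and> p j < 1"
  shows "0 < um S E p n S"
  using assms(2)
proof (induction n)
  case 0 then show ?case by (simp add: um0)
next
  case (Suc n)
  then have h: "0 < um S E p n S" "0 \<le> p n" "p n < 1" by auto
  have "0 \<le> p n * (\<Sum>A\<in>Pow S. if A \<inter> E n = S then um S E p n A else 0)"
  proof -
    have "\<forall>j<n. 0 \<le> p j \<and> p j \<le> 1" using Suc.prems by (metis less_SucI less_imp_le)
    then have "\<And>A. 0 \<le> um S E p n A" by (intro um_nonneg[OF assms(1)])
    then show ?thesis using h by (intro mult_nonneg_nonneg sum_nonneg) auto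
  qed
  moreover have "0 < (1 - p n) * um S E p n S" using h by simp
  ultimately show ?case unfolding um_Suc[OF assms(1)] by linarith
qed

definition Zn :: "'a set \<Rightarrow> (nat \<Rightarrow> 'a set) \<Rightarrow> (nat \<Rightarrow> real) \<Rightarrow> nat \<Rightarrow> real" where
  "Zn S E p n = 1 - um S E p n {}"

lemma Zn_pos:
  assumes "finite S" "S \<noteq> {}" "\<forall>j<n. 0 \<le> p j \<and> p j < 1"
  shows "0 < Zn S E p n"
proof -
  have nn: "\<And>A. 0 \<le> um S E p n A" using assms(3) by (intro um_nonneg[OF assms(1)]) auto
  have "(\<Sum>A\<in>{{}, S}. um S E p n A) \<le> (\<Sum>A\<in>Pow S. um S E p n A)"
    using assms(1) nn by (intro sum_mono2) auto
  then have "um S E p n {} + um S E p n S \<le> 1"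
    using assms um_total[OF assms(1)] by simp
  then show ?thesis using um_S_pos[OF assms(1,3), of E] unfolding Zn_def by linarith
qed


lemma pair_sum:
  assumes "finite S" "F \<subseteq> S" "F \<noteq> S"
  shows "(\<Sum>(A,B)\<in>{(A,B). A \<subseteq> S \<and> B \<subseteq> S \<and> A \<inter> B = C}. m1 A * simple_bpa S F q B)
    = q * (\<Sum>A\<in>Pow S. if A \<inter> F = C then m1 A else 0) + (1-q) * (if C \<subseteq> S then m1 C else 0)"
proof -
  have set: "{(A,B). A \<subseteq> S \<and> B \<subseteq> S \<and> A \<inter> B = C} = {x \<in> Pow S \<times> Pow S. fst x \<inter> snd x = C}"
    by auto
  have "(\<Sum>(A,B)\<in>{(A,B). A \<subseteq> S \<and> B \<subseteq> S \<and> A \<inter> B = C}. m1 A * simple_bpa S F q B)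
     = (\<Sum>x\<in>Pow S \<times> Pow S. if fst x \<inter> snd x = C then m1 (fst x) * simple_bpa S F q (snd x) else 0)"
    unfolding set using assms(1) by (subst sum.inter_filter) (auto intro!: sum.cong split: prod.splits)
  also have "\<dots> = (\<Sum>A\<in>Pow S. \<Sum>B\<in>Pow S. if A \<inter> B = C then m1 A * simple_bpa S F q B else 0)"
    by (subst sum.cartesian_product) (simp add: case_prod_beta)
  also have "\<dots> = (\<Sum>A\<in>Pow S. (if A \<inter> F = C then q * m1 A else 0) + (if A = C then (1 - q) * m1 A else 0))"
  proof (rule sum.cong)
    fix A assume A: "A \<in> Pow S"
    have "(\<Sum>B\<in>Pow S. if A \<inter> B = C then m1 A * simple_bpa S F q B else 0)
       = (\<Sum>B\<in>Pow S. (if B = F then (if A \<inter> F = C then q * m1 A else 0) else 0)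
            + (if B = S then (if A = C then (1 - q) * m1 A else 0) else 0))"
      using A assms(3) by (intro sum.cong) (auto simp: simple_bpa_def Int_absorb2)
    also have "\<dots> = (if A \<inter> F = C then q * m1 A else 0) + (if A = C then (1 - q) * m1 A else 0)"
      using assms by (simp add: sum.distrib sum.delta)
    finally show "(\<Sum>B\<in>Pow S. if A \<inter> B = C then m1 A * simple_bpa S F q B else 0)
       = (if A \<inter> F = C then q * m1 A else 0) + (if A = C then (1 - q) * m1 A else 0)" .
  qed simp
  also have "\<dots> = q * (\<Sum>A\<in>Pow S. if A \<inter> F = C then m1 A else 0) + (1-q) * (if C \<subseteq> S then m1 C else 0)"
  proof -
    have "(\<Sum>A\<in>Pow S. (if A \<inter> F = C then q * m1 A else 0) + (if A = C then (1 - q) * m1 A else 0))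
      = (\<Sum>A\<in>Pow S. (if A \<inter> F = C then q * m1 A else 0)) + (\<Sum>A\<in>Pow S. (if A = C then (1 - q) * m1 A else 0))"
      by (rule sum.distrib)
    also have "(\<Sum>A\<in>Pow S. (if A \<inter> F = C then q * m1 A else 0)) = q * (\<Sum>A\<in>Pow S. if A \<inter> F = C then m1 A else 0)"
      by (simp add: sum_distrib_left if_distrib mult_zero_right cong: if_cong)
    also have "(\<Sum>A\<in>Pow S. (if A = C then (1 - q) * m1 A else 0)) = (1-q) * (if C \<subseteq> S then m1 C else 0)"
      using assms(1) by (simp add: sum.delta)
    finally show ?thesis .
  qed
  finally show ?thesis .
qed


lemma comb_inv:
  assumes fin: "finite S" and ne: "S \<noteq> {}"
    and hE: "\<forall>j<Suc n. E j \<subseteq> S \<and> E j \<noteq> {} \<and> E j \<noteq> S \<and> 0 < p j \<and> p j < 1"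
  shows "dempster_comb S (\<lambda>j. simple_bpa S (E j) (p j)) n C
     = (if C = {} then 0 else um S E p (Suc n) C / Zn S E p (Suc n))"
  using hE
proof (induction n arbitrary: C)
  case 0
  then have h0: "E 0 \<subseteq> S" "E 0 \<noteq> {}" "E 0 \<noteq> S" by auto
  have G: "(\<Sum>A\<in>Pow S. if A \<inter> E 0 = C then um S E p 0 A else 0) = (if E 0 = C then 1 else 0)" for C
  proof -
    have "(\<Sum>A\<in>Pow S. if A \<inter> E 0 = C then um S E p 0 A else 0)
        = (\<Sum>A\<in>Pow S. if A = S then (if E 0 = C then 1 else 0) else 0)"
      using h0 by (intro sum.cong) (auto simp: um0 Int_absorb1)
    also have "\<dots> = (if E 0 = C then 1 else 0)" using fin by (simp add: sum.delta)
    finally show ?thesis .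
  qed
  have u1: "um S E p 1 C = p 0 * (if E 0 = C then 1 else 0) + (1 - p 0) * (if S = C then 1 else 0)" for C
    using um_Suc[OF fin, of E p 0 C] G by (simp add: um0)
  have "Zn S E p 1 = 1" using u1[of "{}"] h0 ne by (simp add: Zn_def)
  then show ?case using u1[of C] h0 by (auto simp: simple_bpa_def)
next
  case (Suc n)
  define u where "u = um S E p (Suc n)"
  define Z where "Z = Zn S E p (Suc n)"
  define q where "q = p (Suc n)"
  define F where "F = E (Suc n)"
  define m1 where "m1 = dempster_comb S (\<lambda>j. simple_bpa S (E j) (p j)) n"
  have IH: "\<And>C. m1 C = (if C = {} then 0 else u C / Z)"
    using Suc by (simp add: m1_def u_def Z_def)
  have hF: "F \<subseteq> S" "F \<noteq> S" using Suc.prems by (auto simp: F_def)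
  have Zpos: "0 < Z" unfolding Z_def using Suc.prems
    by (intro Zn_pos[OF fin ne]) (auto simp: less_imp_le)
  have uout: "\<And>C. \<not> C \<subseteq> S \<Longrightarrow> u C = 0" unfolding u_def by (rule um_out)
  have ps: "\<And>C. (\<Sum>(A,B)\<in>{(A,B). A \<subseteq> S \<and> B \<subseteq> S \<and> A \<inter> B = C}. m1 A * simple_bpa S F q B)
    = q * (\<Sum>A\<in>Pow S. if A \<inter> F = C then m1 A else 0) + (1-q) * (if C \<subseteq> S then m1 C else 0)"
    by (rule pair_sum[OF fin hF])
  have GC: "(\<Sum>A\<in>Pow S. if A \<inter> F = C then m1 A else 0) = (\<Sum>A\<in>Pow S. if A \<inter> F = C then u A else 0) / Z"
    if "C \<noteq> {}" for C
    unfolding sum_divide_distrib using that by (intro sum.cong) (auto simp: IH)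
  have G0: "(\<Sum>A\<in>Pow S. if A \<inter> F = {} then m1 A else 0) = ((\<Sum>A\<in>Pow S. if A \<inter> F = {} then u A else 0) - u {}) / Z"
  proof -
    have "(\<Sum>A\<in>Pow S. if A \<inter> F = {} then u A else 0)
       = (\<Sum>A\<in>Pow S. (if A \<inter> F = {} then (if A = {} then 0 else u A) else 0) + (if A = {} then u A else 0))"
      by (intro sum.cong) auto
    also have "\<dots> = (\<Sum>A\<in>Pow S. if A \<inter> F = {} then (if A = {} then 0 else u A) else 0) + u {}"
      using fin by (simp add: sum.distrib sum.delta)
    finally have "(\<Sum>A\<in>Pow S. if A \<inter> F = {} then u A else 0) - u {}
       = (\<Sum>A\<in>Pow S. if A \<inter> F = {} then (if A = {} then 0 else u A) else 0)" by simp
    moreover have "(\<Sum>A\<in>Pow S. if A \<inter> F = {} then m1 A else 0)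
      = (\<Sum>A\<in>Pow S. (if A \<inter> F = {} then (if A = {} then 0 else u A) else 0) / Z)"
      by (intro sum.cong) (auto simp: IH)
    ultimately show ?thesis by (simp add: sum_divide_distrib)
  qed
  have rec: "\<And>C. um S E p (Suc (Suc n)) C = q * (\<Sum>A\<in>Pow S. if A \<inter> F = C then u A else 0) + (1 - q) * u C"
    unfolding u_def q_def F_def by (rule um_Suc[OF fin])
  define K where "K = 1 - (\<Sum>(A,B)\<in>{(A,B). A \<subseteq> S \<and> B \<subseteq> S \<and> A \<inter> B = {}}. m1 A * simple_bpa S F q B)"
  have K: "K = Zn S E p (Suc (Suc n)) / Z"
    unfolding K_def ps G0 using Zpos
    by (simp add: IH Zn_def rec Z_def u_def field_simps)
  have "dempster_comb S (\<lambda>j. simple_bpa S (E j) (p j)) (Suc n) C = dempster S m1 (simple_bpa S F q) C"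
    by (simp add: m1_def F_def q_def)
  also have "\<dots> = (if C = {} then 0 else um S E p (Suc (Suc n)) C / Zn S E p (Suc (Suc n)))"
  proof (cases "C = {}")
    case True then show ?thesis by (simp add: dempster_def)
  next
    case False
    have num: "(\<Sum>(A,B)\<in>{(A,B). A \<subseteq> S \<and> B \<subseteq> S \<and> A \<inter> B = C}. m1 A * simple_bpa S F q B)
        = um S E p (Suc (Suc n)) C / Z"
      unfolding ps GC[OF False] rec using False uout Zpos
      by (auto simp: IH field_simps)
    show ?thesis unfolding dempster_def Let_def K_def[symmetric] num K using False Zpos by simp
  qed
  finally show ?case .
qed




lemma top_sub:
  assumes "qef S k E p"
  shows "gen_topology S (evfam k E) \<subseteq> Pow S"
proof
  fix X assume X: "X \<in> gen_topology S (evfam k E)"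
  have Es: "\<forall>j<k. E j \<subseteq> S" using assms by (simp add: qef_def)
  show "X \<in> Pow S"
  proof (cases "X = {} \<or> X = S")
    case True then show ?thesis by auto
  next
    case False
    then obtain F where XF: "X = \<Union>F" and F: "F \<subseteq> {\<Inter> G | G. finite G \<and> G \<noteq> {} \<and> G \<subseteq> evfam k E}"
      using X unfolding gen_topology_def by blast
    have "Y \<subseteq> S" if "Y \<in> F" for Y
    proof -
      obtain G where "Y = \<Inter>G" "G \<noteq> {}" "G \<subseteq> evfam k E" using F \<open>Y \<in> F\<close> by blast
      then obtain g where "g \<in> G" "Y \<subseteq> g" "g \<in> E ` {..<k}" unfolding evfam_def by blast
      then show ?thesis using Es by blast
    qed
    then show ?thesis using XF by blast
  qed
qed

lemma imap_top:
  assumes "qef S k E p" "I \<subseteq> {..<k}"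
  shows "imap S E I \<in> gen_topology S (evfam k E)"
proof (cases "I = {}")
  case True then show ?thesis by (simp add: imap_def gen_topology_def)
next
  case False
  have sub: "\<Inter>(E ` I) \<subseteq> S" using assms False unfolding qef_def by blast
  have fin: "finite (E ` I)" by (rule finite_imageI, rule finite_subset[OF assms(2)], simp)
  have "\<Inter>(E ` I) \<in> {\<Inter> G | G. finite G \<and> G \<noteq> {} \<and> G \<subseteq> evfam k E}"
    using fin False assms(2) unfolding evfam_def by blast
  then have "\<Union>{\<Inter>(E ` I)} \<in> {\<Union> F | F. F \<subseteq> {\<Inter> G | G. finite G \<and> G \<noteq> {} \<and> G \<subseteq> evfam k E}}"
    by blast
  then show ?thesis using sub unfolding gen_topology_def imap_def by (simp add: Int_absorb1)
qed

lemma um_top: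
  assumes "qef S k E p" "A \<notin> gen_topology S (evfam k E)"
  shows "um S E p k A = 0"
  unfolding um_def
proof (intro sum.neutral ballI)
  fix I assume "I \<in> Pow {..<k}"
  then have "imap S E I \<noteq> A" using imap_top[OF assms(1), of I] assms(2) by auto
  then show "(if imap S E I = A then wt p k I else 0) = 0" by simp
qed

lemma delta_tau_eq:
  assumes q: "qef S k E p"
  shows "delta_tau S k E p (intersection_map S) T = um S E p k T"
proof (cases "T \<in> gen_topology S (evfam k E)")
  case False then show ?thesis using um_top[OF q] by (simp add: delta_tau_def)
next
  case True
  have inj: "inj_on E {..<k}" using q by (simp add: qef_def)
  have injP: "inj_on (image E) (Pow {..<k})" by (rule inj_on_image_Pow[OF inj])
  have set: "{B. B \<subseteq> evfam k E \<and> intersection_map S B = T}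
      = image E ` {I \<in> Pow {..<k}. intersection_map S (E ` I) = T}"
    unfolding evfam_def by (auto simp: subset_image_iff)
  have im: "intersection_map S (E ` I) = imap S E I" if "I \<subseteq> {..<k}" for I
  proof (cases "I = {}")
    case False
    then have "\<Inter>(E ` I) \<subseteq> S" using q that unfolding qef_def by blast
    then show ?thesis using False by (auto simp: intersection_map_def imap_def)
  qed (simp add: intersection_map_def imap_def)
  have dl: "delta k E p (E ` I) = wt p k I" if "I \<subseteq> {..<k}" for I
    unfolding delta_def wt_def
  proof (rule prod.cong)
    fix j assume "j \<in> {..<k}"
    then have "E j \<in> E ` I \<longleftrightarrow> j \<in> I" using inj that by (auto simp: inj_on_def)
    then show "(if E j \<in> E ` I then p j else 1 - p j) = (if j \<in> I then p j else 1 - p j)" by simp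
  qed simp
  have "delta_tau S k E p (intersection_map S) T
      = (\<Sum>B\<in>image E ` {I \<in> Pow {..<k}. intersection_map S (E ` I) = T}. delta k E p B)"
    using True unfolding delta_tau_def set by simp
  also have "\<dots> = (\<Sum>I\<in>{I \<in> Pow {..<k}. intersection_map S (E ` I) = T}. delta k E p (E ` I))"
  proof -
    have "inj_on (image E) {I \<in> Pow {..<k}. intersection_map S (E ` I) = T}"
      by (rule inj_on_subset[OF injP]) auto
    then show ?thesis by (simp add: sum.reindex)
  qed
  also have "\<dots> = (\<Sum>I\<in>Pow {..<k}. if intersection_map S (E ` I) = T then delta k E p (E ` I) else 0)"
    using sum.inter_filter[of "Pow {..<k}" "\<lambda>I. delta k E p (E ` I)" "\<lambda>I. intersection_map S (E ` I) = T"]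
    by simp
  also have "\<dots> = um S E p k T"
    unfolding um_def by (intro sum.cong) (auto simp: im dl)
  finally show ?thesis .
qed

theorem proposition5:
  fixes S :: "'a set" and k :: nat and E :: "nat \<Rightarrow> 'a set" and p :: "nat \<Rightarrow> real"
    and P :: "'a set"
  assumes "qef S k E p"
    and "P \<subseteq> S"
  shows "Bel_J S k E p (intersection_map S) (gen_topology S (evfam k E) - {{}}) P
       = Bel (dempster_comb S (\<lambda>j. simple_bpa S (E j) (p j)) (k - 1)) P"
proof -
  note q = assms(1)
  have fin: "finite S" and ne: "S \<noteq> {}" and k1: "k \<ge> 1" using q by (auto simp: qef_def)
  have sk: "Suc (k - 1) = k" using k1 by simp
  define top where "top = gen_topology S (evfam k E)"
  define J where "J = top - {{}}"
  have hE: "\<forall>j<Suc (k - 1). E j \<subseteq> S \<and> E j \<noteq> {} \<and> E j \<noteq> S \<and> 0 < p j \<and> p j < 1"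
    using q sk by (simp add: qef_def)
  have m: "dempster_comb S (\<lambda>j. simple_bpa S (E j) (p j)) (k - 1) C
     = (if C = {} then 0 else um S E p k C / Zn S E p k)" for C
    using comb_inv[OF fin ne hE] sk by simp
  have Jsub: "J \<subseteq> Pow S - {{}}" using top_sub[OF q] by (auto simp: J_def top_def)
  have sumJ: "(\<Sum>T\<in>J. delta_tau S k E p (intersection_map S) T) = Zn S E p k"
  proof -
    have "(\<Sum>T\<in>J. delta_tau S k E p (intersection_map S) T) = (\<Sum>T\<in>J. um S E p k T)"
      by (simp add: delta_tau_eq[OF q])
    also have "\<dots> = (\<Sum>T\<in>Pow S - {{}}. um S E p k T)"
      using Jsub fin um_top[OF q] by (intro sum.mono_neutral_left) (auto simp: J_def top_def)
    also have "\<dots> = (\<Sum>T\<in>Pow S. um S E p k T) - um S E p k {}"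
      using fin by (simp add: sum_diff1)
    also have "\<dots> = Zn S E p k" using um_total[OF fin] by (simp add: Zn_def)
    finally show ?thesis .
  qed
  have "Bel_J S k E p (intersection_map S) J P
      = (\<Sum>A\<in>Pow P. if A \<in> J then um S E p k A / Zn S E p k else 0)"
    unfolding Bel_J_def delta_J_def delta_tau_eq[OF q] sumJ[unfolded delta_tau_eq[OF q]] by (rule refl)
  also have "\<dots> = (\<Sum>A\<in>Pow P. dempster_comb S (\<lambda>j. simple_bpa S (E j) (p j)) (k - 1) A)"
  proof (rule sum.cong)
    fix A assume "A \<in> Pow P"
    show "(if A \<in> J then um S E p k A / Zn S E p k else 0)
        = dempster_comb S (\<lambda>j. simple_bpa S (E j) (p j)) (k - 1) A"
      unfolding m using um_top[OF q, of A] by (auto simp: J_def top_def)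
  qed simp
  finally show ?thesis unfolding Bel_def J_def top_def .
qed

end
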